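(* Let $\mathcal{C}\subseteq\mathbb{R}[x_1,\dots,x_n]$ be convex and closed in the LF-topology and let $A\in\mathfrak{d}$. For $d\in\mathbb{N}_0$ set $A_d:=A|_{\mathbb{R}[x_1,\dots,x_n]_{\le d}}$ and $\mathcal{C}_d:=\mathcal{C}\cap\mathbb{R}[x_1,\dots,x_n]_{\le d}$. If for every $d\in\mathbb{N}_0$ there exists $\varepsilon_d>0$ such that $(\mathbb{1}+\lambda A_d)\mathcal{C}_d\subseteq\mathcal{C}_d$ for all $\lambda\in[0,\varepsilon_d)$, then $A\in\mathfrak{d}_\mathcal{C}$.
   Context: $\mathfrak{d}$ is the set of linear maps $\sum_\alpha q_\alpha\partial^\alpha$ on $\mathbb{R}[x_1,\dots,x_n]$ with $q_\alpha\in\mathbb{R}[x_1,\dots,x_n]_{\le|\alpha|}$; they preserve each $\mathbb{R}[x_1,\dots,x_n]_{\le d}$, so $e^{tA}=\sum_kt^kA^k/k!$ is well defined. $\mathfrak{D}\subseteq\mathfrak{d}$ consists of the injective elements; $\mathfrak{D}_\mathcal{C}=\{T\in\mathfrak{D}: T\mathcal{C}\subseteq\mathcal{C}\}$ and $\mathfrak{d}_\mathcal{C}=\{A\in\mathfrak{d}: e^{tA}\in\mathfrak{D}_\mathcal{C}\ \forall t\ge0\}$. $\mathbb{1}$ is the identity. The LF-topology is the inductive limit topology of the finite-dimensional spaces $\mathbb{R}[x_1,\dots,x_n]_{\le d}$. *)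

theory Defs
  imports "HOL-Analysis.Analysis"
begin

text \<open>Real polynomials in the variables x_0,...,x_(n-1) are represented by their
coefficient functions: a polynomial is a map from exponent vectors
(alpha :: nat => nat, with alpha i = 0 for i >= n) to real coefficients.
The function type carries the product topology (HOL-Analysis, Function_Topology),
which on each finite-dimensional space of polynomials of degree at most d is the
Euclidean topology.\<close>

type_synonym mono = "nat \<Rightarrow> nat"
type_synonym rpoly = "mono \<Rightarrow> real"

definition mdeg :: "nat \<Rightarrow> mono \<Rightarrow> nat" where
  "mdeg n \<alpha> = (\<Sum>i<n. \<alpha> i)"

definition Mon :: "nat \<Rightarrow> nat \<Rightarrow> mono set" where
  "Mon n d = {\<alpha>. (\<forall>i\<ge>n. \<alpha> i = 0) \<and> mdeg n \<alpha> \<le> d}"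

definition Pd :: "nat \<Rightarrow> nat \<Rightarrow> rpoly set" where
  "Pd n d = {p. \<forall>\<alpha>. p \<alpha> \<noteq> 0 \<longrightarrow> \<alpha> \<in> Mon n d}"

definition Pol :: "nat \<Rightarrow> rpoly set" where
  "Pol n = (\<Union>d. Pd n d)"

definition padd :: "rpoly \<Rightarrow> rpoly \<Rightarrow> rpoly" where
  "padd p q = (\<lambda>\<beta>. p \<beta> + q \<beta>)"

definition pscale :: "real \<Rightarrow> rpoly \<Rightarrow> rpoly" where
  "pscale c p = (\<lambda>\<beta>. c * p \<beta>)"

definition pmul :: "rpoly \<Rightarrow> rpoly \<Rightarrow> rpoly" where
  "pmul p q = (\<lambda>\<gamma>. \<Sum>\<alpha>\<in>{\<alpha>. \<forall>i. \<alpha> i \<le> \<gamma> i}. p \<alpha> * q (\<lambda>i. \<gamma> i - \<alpha> i))"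

definition pdiff :: "nat \<Rightarrow> mono \<Rightarrow> rpoly \<Rightarrow> rpoly" where
  "pdiff n \<alpha> p = (\<lambda>\<beta>. (\<Prod>i<n. fact (\<beta> i + \<alpha> i) / fact (\<beta> i)) * p (\<lambda>i. \<beta> i + \<alpha> i))"

text \<open>The set frak-d: operators sum_alpha q_alpha d^alpha with deg q_alpha <= |alpha|,
regarded as maps on R[x_1..x_n] (only their values on polynomials matter).\<close>
definition dops :: "nat \<Rightarrow> (rpoly \<Rightarrow> rpoly) set" where
  "dops n = {A. \<exists>q :: mono \<Rightarrow> rpoly.
      (\<forall>\<alpha>. (\<forall>i\<ge>n. \<alpha> i = 0) \<longrightarrow> q \<alpha> \<in> Pd n (mdeg n \<alpha>)) \<and>
      (\<forall>d. \<forall>p\<in>Pd n d. A p = (\<lambda>\<beta>. \<Sum>\<alpha>\<in>Mon n d. pmul (q \<alpha>) (pdiff n \<alpha> p) \<beta>))}"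

definition Dops :: "nat \<Rightarrow> (rpoly \<Rightarrow> rpoly) set" where
  "Dops n = {T\<in>dops n. inj_on T (Pol n)}"

definition Dops_C :: "nat \<Rightarrow> rpoly set \<Rightarrow> (rpoly \<Rightarrow> rpoly) set" where
  "Dops_C n C = {T\<in>Dops n. T ` C \<subseteq> C}"

text \<open>e^{tA} p = sum_k t^k A^k p / k!; the series is evaluated coefficientwise
(it lives in the finite-dimensional space R[x]_{<= d} containing p).\<close>
definition op_exp :: "real \<Rightarrow> (rpoly \<Rightarrow> rpoly) \<Rightarrow> rpoly \<Rightarrow> rpoly" where
  "op_exp t A p = (\<lambda>\<beta>. \<Sum>k. (t ^ k / fact k) * (A ^^ k) p \<beta>)"

definition dops_C :: "nat \<Rightarrow> rpoly set \<Rightarrow> (rpoly \<Rightarrow> rpoly) set" where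
  "dops_C n C = {A\<in>dops n. \<forall>t\<ge>0. op_exp t A \<in> Dops_C n C}"

definition pconvex :: "rpoly set \<Rightarrow> bool" where
  "pconvex C \<longleftrightarrow> (\<forall>p\<in>C. \<forall>q\<in>C. \<forall>u::real. 0 \<le> u \<and> u \<le> 1 \<longrightarrow>
      padd (pscale u p) (pscale (1 - u) q) \<in> C)"

text \<open>Closedness in the LF-topology = inductive limit (final) topology of the
spaces R[x]_{<= d}: C is closed iff every C intersected with R[x]_{<= d} is closed in R[x]_{<= d}.\<close>
definition LF_closed :: "nat \<Rightarrow> rpoly set \<Rightarrow> bool" where
  "LF_closed n C \<longleftrightarrow> (\<forall>d. closedin (top_of_set (Pd n d)) (C \<inter> Pd n d))"

end

theory Submission
  imports Defs
begin

definition supp :: "nat \<Rightarrow> mono \<Rightarrow> bool" where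
  "supp n \<alpha> \<longleftrightarrow> (\<forall>i\<ge>n. \<alpha> i = 0)"

definition mon :: "mono \<Rightarrow> rpoly" where
  "mon \<beta> = (\<lambda>\<gamma>. if \<gamma> = \<beta> then 1 else 0)"

lemma Mon_iff: "\<alpha> \<in> Mon n d \<longleftrightarrow> supp n \<alpha> \<and> mdeg n \<alpha> \<le> d"
  by (simp add: Mon_def supp_def)

lemma Pd_iff: "p \<in> Pd n d \<longleftrightarrow> (\<forall>\<alpha>. \<alpha> \<notin> Mon n d \<longrightarrow> p \<alpha> = 0)"
  unfolding Pd_def by blast

lemma Pol_iff: "p \<in> Pol n \<longleftrightarrow> (\<exists>d. p \<in> Pd n d)"
  by (simp add: Pol_def)

lemma PdD: "p \<in> Pd n d \<Longrightarrow> \<alpha> \<notin> Mon n d \<Longrightarrow> p \<alpha> = 0"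
  unfolding Pd_iff by blast

lemma finite_Mon: "finite (Mon n d)"
proof -
  have "Mon n d \<subseteq> {f. \<forall>x. (x \<in> {..<n} \<longrightarrow> f x \<in> {..d}) \<and> (x \<notin> {..<n} \<longrightarrow> f x = 0)}"
  proof
    fix \<alpha> assume a: "\<alpha> \<in> Mon n d"
    have "\<alpha> x \<le> d" if "x < n" for x
    proof -
      have "\<alpha> x \<le> (\<Sum>i<n. \<alpha> i)" using that by (intro member_le_sum) auto
      then show ?thesis using a by (simp add: Mon_def mdeg_def)
    qed
    then show "\<alpha> \<in> {f. \<forall>x. (x \<in> {..<n} \<longrightarrow> f x \<in> {..d}) \<and> (x \<notin> {..<n} \<longrightarrow> f x = 0)}"
      using a by (auto simp: Mon_def)
  qed
  moreover have "finite {f. \<forall>x. (x \<in> {..<n} \<longrightarrow> f x \<in> {..d}) \<and> (x \<notin> {..<n} \<longrightarrow> f x = (0::nat))}"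
    by (rule finite_set_of_finite_funs) auto
  ultimately show ?thesis by (rule finite_subset)
qed

lemma Mon_mono: "d \<le> e \<Longrightarrow> Mon n d \<subseteq> Mon n e"
  by (auto simp: Mon_def)

lemma Pd_mono: "d \<le> e \<Longrightarrow> p \<in> Pd n d \<Longrightarrow> p \<in> Pd n e"
  unfolding Pd_def using Mon_mono by blast

lemma Pd_Pol: "p \<in> Pd n d \<Longrightarrow> p \<in> Pol n"
  by (auto simp: Pol_def)

lemma Pd_lin: "p \<in> Pd n d \<Longrightarrow> q \<in> Pd n d \<Longrightarrow> (\<lambda>\<gamma>. a * p \<gamma> + b * q \<gamma>) \<in> Pd n d"
  unfolding Pd_iff by auto

lemma Pd_scale: "p \<in> Pd n d \<Longrightarrow> (\<lambda>\<gamma>. a * p \<gamma>) \<in> Pd n d"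
  unfolding Pd_iff by auto

lemma Pd_div: "p \<in> Pd n d \<Longrightarrow> (\<lambda>\<gamma>. p \<gamma> / a) \<in> Pd n d"
  unfolding Pd_iff by auto

lemma Pd_diff: "p \<in> Pd n d \<Longrightarrow> q \<in> Pd n d \<Longrightarrow> (\<lambda>\<gamma>. p \<gamma> - q \<gamma>) \<in> Pd n d"
  unfolding Pd_iff by auto

lemma Pd_zero: "(\<lambda>\<gamma>. 0) \<in> Pd n d"
  unfolding Pd_iff by auto

lemma Pd_sum: "(\<And>i. i \<in> I \<Longrightarrow> f i \<in> Pd n d) \<Longrightarrow> (\<lambda>\<gamma>. \<Sum>i\<in>I. f i \<gamma>) \<in> Pd n d"
  unfolding Pd_iff by auto

lemma mon_Pd: "\<beta> \<in> Mon n d \<Longrightarrow> mon \<beta> \<in> Pd n d"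
  unfolding Pd_iff mon_def by auto

lemma decomp: "p \<in> Pd n d \<Longrightarrow> p = (\<lambda>\<gamma>. \<Sum>\<beta>\<in>Mon n d. p \<beta> * mon \<beta> \<gamma>)"
proof
  fix \<gamma> assume p: "p \<in> Pd n d"
  have "(\<Sum>\<beta>\<in>Mon n d. p \<beta> * mon \<beta> \<gamma>) = (\<Sum>\<beta>\<in>Mon n d. if \<gamma> = \<beta> then p \<gamma> else 0)"
    by (rule sum.cong) (auto simp: mon_def)
  also have "\<dots> = p \<gamma>" using p by (cases "\<gamma> \<in> Mon n d") (auto simp: PdD sum.delta' finite_Mon)
  finally show "p \<gamma> = (\<Sum>\<beta>\<in>Mon n d. p \<beta> * mon \<beta> \<gamma>)" by simp
qed

definition plin :: "nat \<Rightarrow> (rpoly \<Rightarrow> rpoly) \<Rightarrow> bool" where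
  "plin n T \<longleftrightarrow> (\<forall>p\<in>Pol n. \<forall>q\<in>Pol n. \<forall>a b. T (\<lambda>\<gamma>. a * p \<gamma> + b * q \<gamma>) = (\<lambda>\<gamma>. a * T p \<gamma> + b * T q \<gamma>))"

definition pres :: "nat \<Rightarrow> (rpoly \<Rightarrow> rpoly) \<Rightarrow> bool" where
  "pres n T \<longleftrightarrow> (\<forall>d. \<forall>p\<in>Pd n d. T p \<in> Pd n d)"

lemma presD: "pres n T \<Longrightarrow> p \<in> Pd n d \<Longrightarrow> T p \<in> Pd n d"
  unfolding pres_def by blast

lemma plinD: "plin n T \<Longrightarrow> p \<in> Pol n \<Longrightarrow> q \<in> Pol n \<Longrightarrow>
    T (\<lambda>\<gamma>. a * p \<gamma> + b * q \<gamma>) = (\<lambda>\<gamma>. a * T p \<gamma> + b * T q \<gamma>)"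
  unfolding plin_def by blast

lemma zero_Pol: "(\<lambda>\<gamma>. 0) \<in> Pol n"
  using Pd_zero Pd_Pol by blast

lemma plin_zero: "plin n T \<Longrightarrow> T (\<lambda>\<gamma>. 0) = (\<lambda>\<gamma>. 0)"
  using plinD[of n T "\<lambda>\<gamma>. 0" "\<lambda>\<gamma>. 0" 0 0] zero_Pol by simp

lemma plin_scale: "plin n T \<Longrightarrow> p \<in> Pol n \<Longrightarrow> T (\<lambda>\<gamma>. a * p \<gamma>) = (\<lambda>\<gamma>. a * T p \<gamma>)"
  using plinD[of n T p p a 0] by simp

lemma plin_add: "plin n T \<Longrightarrow> p \<in> Pol n \<Longrightarrow> q \<in> Pol n \<Longrightarrow> T (\<lambda>\<gamma>. p \<gamma> + q \<gamma>) = (\<lambda>\<gamma>. T p \<gamma> + T q \<gamma>)"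
  using plinD[of n T p q 1 1] by simp

lemma plin_sum:
  assumes T: "plin n T" and I: "finite I" and f: "\<And>i. i \<in> I \<Longrightarrow> f i \<in> Pd n d"
  shows "T (\<lambda>\<gamma>. \<Sum>i\<in>I. c i * f i \<gamma>) = (\<lambda>\<gamma>. \<Sum>i\<in>I. c i * T (f i) \<gamma>)"
  using I f
proof (induction I rule: finite_induct)
  case empty
  then show ?case using plin_zero[OF T] by simp
next
  case (insert x F)
  have s: "(\<lambda>\<gamma>. \<Sum>i\<in>F. c i * f i \<gamma>) \<in> Pd n d"
    using insert by (intro Pd_sum Pd_scale) auto
  have "T (\<lambda>\<gamma>. \<Sum>i\<in>insert x F. c i * f i \<gamma>) = T (\<lambda>\<gamma>. c x * f x \<gamma> + 1 * (\<Sum>i\<in>F. c i * f i \<gamma>))"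
    using insert by simp
  also have "\<dots> = (\<lambda>\<gamma>. c x * T (f x) \<gamma> + 1 * T (\<lambda>\<gamma>. \<Sum>i\<in>F. c i * f i \<gamma>) \<gamma>)"
    using plinD[OF T, of "f x" "\<lambda>\<gamma>. \<Sum>i\<in>F. c i * f i \<gamma>" "c x" 1] insert s Pd_Pol by auto
  also have "\<dots> = (\<lambda>\<gamma>. \<Sum>i\<in>insert x F. c i * T (f i) \<gamma>)"
    using insert by simp
  finally show ?case .
qed

lemma plin_decomp:
  assumes T: "plin n T" and p: "p \<in> Pd n d"
  shows "T p = (\<lambda>\<gamma>. \<Sum>\<beta>\<in>Mon n d. p \<beta> * T (mon \<beta>) \<gamma>)"
proof -
  have "T p = T (\<lambda>\<gamma>. \<Sum>\<beta>\<in>Mon n d. p \<beta> * mon \<beta> \<gamma>)" using decomp[OF p] by simp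
  also have "\<dots> = (\<lambda>\<gamma>. \<Sum>\<beta>\<in>Mon n d. p \<beta> * T (mon \<beta>) \<gamma>)"
    by (rule plin_sum[OF T finite_Mon]) (rule mon_Pd)
  finally show ?thesis .
qed

lemma plin_comp:
  assumes "plin n S" "plin n T" "pres n T"
  shows "plin n (S \<circ> T)"
  unfolding plin_def
proof (intro ballI allI)
  fix p q a b assume pq: "p \<in> Pol n" "q \<in> Pol n"
  have "T p \<in> Pol n" "T q \<in> Pol n"
    using pq assms(3) by (auto simp: Pol_iff dest: presD)
  then show "(S \<circ> T) (\<lambda>\<gamma>. a * p \<gamma> + b * q \<gamma>) = (\<lambda>\<gamma>. a * (S \<circ> T) p \<gamma> + b * (S \<circ> T) q \<gamma>)"
    using pq assms by (simp add: plinD)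
qed

lemma pres_comp: "pres n S \<Longrightarrow> pres n T \<Longrightarrow> pres n (S \<circ> T)"
  unfolding pres_def by auto

lemma plin_id: "plin n id" and pres_id: "pres n id"
  unfolding plin_def pres_def by auto

lemma funpow_lin:
  assumes "plin n A" "pres n A"
  shows "plin n (A ^^ k) \<and> pres n (A ^^ k)"
proof (induction k)
  case 0
  then show ?case using plin_id pres_id by (simp add: id_def)
next
  case (Suc k)
  have "A ^^ Suc k = A \<circ> (A ^^ k)" by simp
  then show ?case using Suc assms plin_comp pres_comp by metis
qed

lemma pmul_lin2: "pmul q (\<lambda>\<gamma>. a * f \<gamma> + b * g \<gamma>) = (\<lambda>\<gamma>. a * pmul q f \<gamma> + b * pmul q g \<gamma>)"
  unfolding pmul_def by (auto simp: sum.distrib sum_distrib_left algebra_simps intro!: ext)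

lemma pdiff_lin: "pdiff n \<alpha> (\<lambda>\<gamma>. a * f \<gamma> + b * g \<gamma>) = (\<lambda>\<gamma>. a * pdiff n \<alpha> f \<gamma> + b * pdiff n \<alpha> g \<gamma>)"
  unfolding pdiff_def by (auto simp: algebra_simps intro!: ext)

definition Rop :: "nat \<Rightarrow> (mono \<Rightarrow> rpoly) \<Rightarrow> nat \<Rightarrow> rpoly \<Rightarrow> rpoly" where
  "Rop n q d p = (\<lambda>\<beta>. \<Sum>\<alpha>\<in>Mon n d. pmul (q \<alpha>) (pdiff n \<alpha> p) \<beta>)"

lemma Rop_lin: "Rop n q d (\<lambda>\<gamma>. a * f \<gamma> + b * g \<gamma>) = (\<lambda>\<gamma>. a * Rop n q d f \<gamma> + b * Rop n q d g \<gamma>)"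
  unfolding Rop_def pdiff_lin pmul_lin2 by (auto simp: sum.distrib sum_distrib_left intro!: ext)

lemma mdeg_add: "mdeg n (\<lambda>i. f i + g i) = mdeg n f + mdeg n g"
  by (simp add: mdeg_def sum.distrib)

lemma mdeg_mono: "(\<forall>i. \<alpha> i \<le> \<beta> i) \<Longrightarrow> mdeg n \<alpha> \<le> mdeg n \<beta>"
  unfolding mdeg_def by (intro sum_mono) auto

lemma Rop_Pd:
  assumes q: "\<forall>\<alpha>. supp n \<alpha> \<longrightarrow> q \<alpha> \<in> Pd n (mdeg n \<alpha>)" and p: "p \<in> Pd n d"
  shows "Rop n q d p \<in> Pd n d"
  unfolding Pd_iff
proof (intro allI impI)
  fix \<gamma> assume g: "\<gamma> \<notin> Mon n d"
  show "Rop n q d p \<gamma> = 0"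
  proof (rule ccontr)
    assume "Rop n q d p \<gamma> \<noteq> 0"
    then obtain \<alpha> where a: "\<alpha> \<in> Mon n d" and "pmul (q \<alpha>) (pdiff n \<alpha> p) \<gamma> \<noteq> 0"
      unfolding Rop_def using sum.not_neutral_contains_not_neutral by blast
    then obtain \<alpha>' where a'le: "\<forall>i. \<alpha>' i \<le> \<gamma> i"
      and nz: "q \<alpha> \<alpha>' * pdiff n \<alpha> p (\<lambda>i. \<gamma> i - \<alpha>' i) \<noteq> 0"
      unfolding pmul_def using sum.not_neutral_contains_not_neutral by blast
    define \<delta> where "\<delta> = (\<lambda>i. \<gamma> i - \<alpha>' i)"
    have "q \<alpha> \<alpha>' \<noteq> 0" using nz by auto
    moreover have "q \<alpha> \<in> Pd n (mdeg n \<alpha>)" using q a by (simp add: Mon_iff)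
    ultimately have a'M: "\<alpha>' \<in> Mon n (mdeg n \<alpha>)" using PdD by blast
    have "p (\<lambda>i. \<delta> i + \<alpha> i) \<noteq> 0" using nz unfolding pdiff_def \<delta>_def by auto
    then have dM: "(\<lambda>i. \<delta> i + \<alpha> i) \<in> Mon n d" using p PdD by blast
    have geq: "\<gamma> = (\<lambda>i. \<alpha>' i + \<delta> i)" using a'le unfolding \<delta>_def by (auto intro!: ext)
    have "supp n \<gamma>" using a'M dM unfolding geq by (auto simp: Mon_iff supp_def)
    moreover have "mdeg n \<gamma> \<le> d"
    proof -
      have "mdeg n \<gamma> = mdeg n \<alpha>' + mdeg n \<delta>" unfolding geq by (rule mdeg_add)
      also have "\<dots> \<le> mdeg n \<alpha> + mdeg n \<delta>" using a'M by (simp add: Mon_iff)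
      also have "\<dots> = mdeg n (\<lambda>i. \<delta> i + \<alpha> i)" by (simp add: mdeg_add)
      also have "\<dots> \<le> d" using dM by (simp add: Mon_iff)
      finally show ?thesis .
    qed
    ultimately show False using g by (simp add: Mon_iff)
  qed
qed

lemma dops_plin_pres:
  assumes "A \<in> dops n"
  shows "plin n A \<and> pres n A"
proof -
  obtain q where q: "\<forall>\<alpha>. (\<forall>i\<ge>n. \<alpha> i = 0) \<longrightarrow> q \<alpha> \<in> Pd n (mdeg n \<alpha>)"
    and A: "\<forall>d. \<forall>p\<in>Pd n d. A p = Rop n q d p"
    using assms unfolding dops_def Rop_def by blast
  have q': "\<forall>\<alpha>. supp n \<alpha> \<longrightarrow> q \<alpha> \<in> Pd n (mdeg n \<alpha>)" using q by (simp add: supp_def)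
  have "pres n A" unfolding pres_def using A Rop_Pd[OF q'] by auto
  moreover have "plin n A" unfolding plin_def
  proof (intro ballI allI)
    fix f g a b assume "f \<in> Pol n" "g \<in> Pol n"
    then obtain d1 d2 where "f \<in> Pd n d1" "g \<in> Pd n d2" by (auto simp: Pol_iff)
    then have f: "f \<in> Pd n (max d1 d2)" and g: "g \<in> Pd n (max d1 d2)" by (meson Pd_mono max.cobounded1 max.cobounded2)+
    show "A (\<lambda>\<gamma>. a * f \<gamma> + b * g \<gamma>) = (\<lambda>\<gamma>. a * A f \<gamma> + b * A g \<gamma>)"
    proof -
      have "A (\<lambda>\<gamma>. a * f \<gamma> + b * g \<gamma>) = Rop n q (max d1 d2) (\<lambda>\<gamma>. a * f \<gamma> + b * g \<gamma>)"
        using A Pd_lin[OF f g] by blast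
      then show ?thesis using A f g by (simp add: Rop_lin)
    qed
  qed
  ultimately show ?thesis by simp
qed

definition cdf :: "nat \<Rightarrow> mono \<Rightarrow> mono \<Rightarrow> real" where
  "cdf n \<alpha> \<beta> = (\<Prod>i<n. fact (\<beta> i) / fact (\<beta> i - \<alpha> i))"

lemma pdiff_mon:
  "pdiff n \<alpha> (mon \<beta>) = (if \<forall>i. \<alpha> i \<le> \<beta> i then (\<lambda>\<gamma>. cdf n \<alpha> \<beta> * mon (\<lambda>i. \<beta> i - \<alpha> i) \<gamma>) else (\<lambda>\<gamma>. 0))"
proof (cases "\<forall>i. \<alpha> i \<le> \<beta> i")
  case True
  show ?thesis
  proof (rule ext)
    fix \<gamma>
    have eq: "((\<lambda>i. \<gamma> i + \<alpha> i) = \<beta>) \<longleftrightarrow> (\<gamma> = (\<lambda>i. \<beta> i - \<alpha> i))"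
      using True by (auto simp: fun_eq_iff) (metis add_diff_cancel_right')
    show "pdiff n \<alpha> (mon \<beta>) \<gamma> = (if \<forall>i. \<alpha> i \<le> \<beta> i then (\<lambda>\<gamma>. cdf n \<alpha> \<beta> * mon (\<lambda>i. \<beta> i - \<alpha> i) \<gamma>) else (\<lambda>\<gamma>. 0)) \<gamma>"
    proof (cases "\<gamma> = (\<lambda>i. \<beta> i - \<alpha> i)")
      case True2: True
      then show ?thesis using True eq unfolding pdiff_def mon_def cdf_def by simp
    next
      case False
      then show ?thesis using True eq unfolding pdiff_def mon_def by simp
    qed
  qed
next
  case False
  then have "\<And>\<gamma>. (\<lambda>i. \<gamma> i + \<alpha> i) \<noteq> \<beta>" by (auto simp: fun_eq_iff) (metis le_add2)
  then show ?thesis using False unfolding pdiff_def mon_def by auto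
qed

lemma supp_le: "supp n \<beta> \<Longrightarrow> \<forall>i. \<alpha> i \<le> \<beta> i \<Longrightarrow> supp n \<alpha>"
  by (auto simp: supp_def) (metis le_zero_eq)

lemma finite_le: "supp n \<gamma> \<Longrightarrow> finite {\<alpha>. \<forall>i. \<alpha> i \<le> \<gamma> i}"
proof -
  assume s: "supp n \<gamma>"
  have "{\<alpha>. \<forall>i. \<alpha> i \<le> \<gamma> i} \<subseteq> Mon n (mdeg n \<gamma>)"
  proof
    fix \<alpha> assume "\<alpha> \<in> {\<alpha>. \<forall>i. \<alpha> i \<le> \<gamma> i}"
    then have le: "\<forall>i. \<alpha> i \<le> \<gamma> i" by simp
    then have "supp n \<alpha>" using s by (auto simp: supp_def) (metis le_zero_eq)
    then show "\<alpha> \<in> Mon n (mdeg n \<gamma>)" using mdeg_mono[OF le] by (simp add: Mon_iff)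
  qed
  then show ?thesis using finite_Mon finite_subset by blast
qed

lemma Pol_supp: "q \<in> Pol n \<Longrightarrow> \<not> supp n \<gamma> \<Longrightarrow> q \<gamma> = 0"
  by (auto simp: Pol_iff Mon_iff dest: PdD)

lemma pmul_mon:
  assumes q: "q \<in> Pol n" and d: "supp n \<delta>"
  shows "pmul q (mon \<delta>) = (\<lambda>\<gamma>. if \<forall>i. \<delta> i \<le> \<gamma> i then q (\<lambda>i. \<gamma> i - \<delta> i) else 0)"
proof (rule ext)
  fix \<gamma> :: mono
  let ?S = "{\<alpha>. \<forall>i. \<alpha> i \<le> \<gamma> i}"
  show "pmul q (mon \<delta>) \<gamma> = (if \<forall>i. \<delta> i \<le> \<gamma> i then q (\<lambda>i. \<gamma> i - \<delta> i) else 0)"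
  proof (cases "finite ?S")
    case True
    have "pmul q (mon \<delta>) \<gamma> = (\<Sum>\<alpha>\<in>?S. if \<alpha> = (\<lambda>i. \<gamma> i - \<delta> i) \<and> (\<forall>i. \<delta> i \<le> \<gamma> i) then q \<alpha> else 0)"
      unfolding pmul_def
    proof (rule sum.cong)
      fix \<alpha> assume "\<alpha> \<in> ?S"
      then have le: "\<forall>i. \<alpha> i \<le> \<gamma> i" by simp
      have "((\<lambda>i. \<gamma> i - \<alpha> i) = \<delta>) \<longleftrightarrow> (\<alpha> = (\<lambda>i. \<gamma> i - \<delta> i) \<and> (\<forall>i. \<delta> i \<le> \<gamma> i))"
        using le by (auto simp: fun_eq_iff) (metis diff_diff_cancel diff_le_self)+
      then show "q \<alpha> * mon \<delta> (\<lambda>i. \<gamma> i - \<alpha> i) = (if \<alpha> = (\<lambda>i. \<gamma> i - \<delta> i) \<and> (\<forall>i. \<delta> i \<le> \<gamma> i) then q \<alpha> else 0)"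
        unfolding mon_def by auto
    qed simp
    also have "\<dots> = (if \<forall>i. \<delta> i \<le> \<gamma> i then q (\<lambda>i. \<gamma> i - \<delta> i) else 0)"
    proof (cases "\<forall>i. \<delta> i \<le> \<gamma> i")
      case True2: True
      then show ?thesis using True by (simp add: sum.delta')
    next
      case False2: False
      then show ?thesis by (simp only: False2 simp_thms if_False sum.neutral_const)
    qed
    finally show ?thesis .
  next
    case False
    then have "\<not> supp n \<gamma>" using finite_le by blast
    then have "\<not> supp n (\<lambda>i. \<gamma> i - \<delta> i)" using d by (auto simp: supp_def)
    then have "q (\<lambda>i. \<gamma> i - \<delta> i) = 0" using Pol_supp q by blast
    then show ?thesis using False unfolding pmul_def by simp
  qed
qed

lemma pmul_scale2: "pmul q (\<lambda>\<gamma>. c * f \<gamma>) = (\<lambda>\<gamma>. c * pmul q f \<gamma>)"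
  unfolding pmul_def by (auto simp: sum_distrib_left algebra_simps intro!: ext)

lemma pmul_zero2: "pmul q (\<lambda>\<gamma>. 0) = (\<lambda>\<gamma>. 0)"
  unfolding pmul_def by auto

lemma pmul_sum2: "pmul q (\<lambda>\<gamma>. \<Sum>i\<in>I. c i * f i \<gamma>) = (\<lambda>\<gamma>. \<Sum>i\<in>I. c i * pmul q (f i) \<gamma>)"
  unfolding pmul_def by (auto simp: sum_distrib_left algebra_simps intro!: ext sum.swap)

lemma pdiff_sum: "pdiff n \<alpha> (\<lambda>\<gamma>. \<Sum>i\<in>I. c i * f i \<gamma>) = (\<lambda>\<gamma>. \<Sum>i\<in>I. c i * pdiff n \<alpha> (f i) \<gamma>)"
  unfolding pdiff_def by (rule ext) (simp add: sum_distrib_left mult.left_commute)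

lemma mdeg_sub: "(\<forall>i. \<alpha> i \<le> \<beta> i) \<Longrightarrow> mdeg n (\<lambda>i. \<beta> i - \<alpha> i) + mdeg n \<alpha> = mdeg n \<beta>"
proof -
  assume le: "\<forall>i. \<alpha> i \<le> \<beta> i"
  have "mdeg n (\<lambda>i. \<beta> i - \<alpha> i) + mdeg n \<alpha> = mdeg n (\<lambda>i. (\<beta> i - \<alpha> i) + \<alpha> i)"
    by (simp add: mdeg_add)
  also have "(\<lambda>i. (\<beta> i - \<alpha> i) + \<alpha> i) = \<beta>" using le by auto
  finally show ?thesis .
qed

lemma mdeg_less:
  assumes s: "supp n \<beta>" and le: "\<forall>i. \<alpha> i \<le> \<beta> i" and ne: "\<alpha> \<noteq> \<beta>"
  shows "mdeg n \<alpha> < mdeg n \<beta>"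
proof -
  obtain j where j: "\<alpha> j \<noteq> \<beta> j" using ne by auto
  have "j < n"
  proof (rule ccontr)
    assume "\<not> j < n"
    then have "\<beta> j = 0" using s by (simp add: supp_def)
    then show False using le j by (metis le_zero_eq)
  qed
  then show ?thesis unfolding mdeg_def
    using le j by (intro sum_strict_mono_ex1) (auto simp: le_less)
qed


lemma pmul_mon_Pd:
  assumes q: "q \<in> Pd n a" and d: "supp n \<delta>"
  shows "pmul q (mon \<delta>) \<in> Pd n (a + mdeg n \<delta>)"
  unfolding Pd_iff
proof (intro allI impI)
  fix \<gamma> assume g: "\<gamma> \<notin> Mon n (a + mdeg n \<delta>)"
  have qP: "q \<in> Pol n" using q Pd_Pol by blast
  show "pmul q (mon \<delta>) \<gamma> = 0"
  proof (cases "\<forall>i. \<delta> i \<le> \<gamma> i")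
    case True
    have "(\<lambda>i. \<gamma> i - \<delta> i) \<notin> Mon n a"
    proof
      assume M: "(\<lambda>i. \<gamma> i - \<delta> i) \<in> Mon n a"
      have "supp n \<gamma>" using M d True by (auto simp: Mon_iff supp_def) 
      moreover have "mdeg n \<gamma> \<le> a + mdeg n \<delta>" using mdeg_sub[OF True, of n] M by (simp add: Mon_iff)
      ultimately show False using g by (simp add: Mon_iff)
    qed
    then show ?thesis using pmul_mon[OF qP d] True q by (simp add: PdD)
  next
    case False
    then show ?thesis using pmul_mon[OF qP d] by auto
  qed
qed

definition cf :: "nat \<Rightarrow> mono \<Rightarrow> real" where
  "cf n \<beta> = (\<Prod>i<n. fact (\<beta> i))"

primrec Qs :: "nat \<Rightarrow> (rpoly \<Rightarrow> rpoly) \<Rightarrow> nat \<Rightarrow> mono \<Rightarrow> rpoly" where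
  "Qs n T 0 = (\<lambda>\<beta> \<gamma>. 0)"
| "Qs n T (Suc k) = (\<lambda>\<beta> \<gamma>. (T (mon \<beta>) \<gamma> -
      (\<Sum>\<alpha>\<in>{\<alpha>. (\<forall>i. \<alpha> i \<le> \<beta> i) \<and> \<alpha> \<noteq> \<beta>}. pmul (Qs n T k \<alpha>) (pdiff n \<alpha> (mon \<beta>)) \<gamma>)) / cf n \<beta>)"

definition qq :: "nat \<Rightarrow> (rpoly \<Rightarrow> rpoly) \<Rightarrow> mono \<Rightarrow> rpoly" where
  "qq n T \<beta> = Qs n T (Suc (mdeg n \<beta>)) \<beta>"

lemma Qs_stable: "supp n \<beta> \<Longrightarrow> mdeg n \<beta> < k \<Longrightarrow> Qs n T k \<beta> = qq n T \<beta>"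
proof (induction k arbitrary: \<beta> rule: less_induct)
  case (less k)
  then obtain k' where k: "k = Suc k'" by (cases k) auto
  let ?m = "mdeg n \<beta>"
  show ?case
  proof (cases "?m = k'")
    case True
    then show ?thesis using k by (simp add: qq_def)
  next
    case False
    then have mk: "?m < k'" using less k by simp
    have "Qs n T k \<beta> = Qs n T (Suc ?m) \<beta>"
      unfolding k Qs.simps
    proof (intro ext arg_cong2[where f="(/)"] refl arg_cong2[where f="(-)"] sum.cong)
      fix \<gamma> \<alpha> assume a: "\<alpha> \<in> {\<alpha>. (\<forall>i. \<alpha> i \<le> \<beta> i) \<and> \<alpha> \<noteq> \<beta>}"
      then have sa: "supp n \<alpha>" and ml: "mdeg n \<alpha> < ?m"
        using supp_le mdeg_less less.prems by auto
      have "Qs n T k' \<alpha> = qq n T \<alpha>" using less.IH[of k' \<alpha>] k sa ml mk by simp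
      moreover have "Qs n T ?m \<alpha> = qq n T \<alpha>" using less.IH[of ?m \<alpha>] k sa ml mk by simp
      ultimately show "pmul (Qs n T k' \<alpha>) (pdiff n \<alpha> (mon \<beta>)) \<gamma> = pmul (Qs n T ?m \<alpha>) (pdiff n \<alpha> (mon \<beta>)) \<gamma>"
        by simp
    qed
    then show ?thesis by (simp add: qq_def)
  qed
qed

lemma qq_eq:
  assumes s: "supp n \<beta>"
  shows "qq n T \<beta> = (\<lambda>\<gamma>. (T (mon \<beta>) \<gamma> -
      (\<Sum>\<alpha>\<in>{\<alpha>. (\<forall>i. \<alpha> i \<le> \<beta> i) \<and> \<alpha> \<noteq> \<beta>}. pmul (qq n T \<alpha>) (pdiff n \<alpha> (mon \<beta>)) \<gamma>)) / cf n \<beta>)"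
  unfolding qq_def[of n T \<beta>] Qs.simps
proof (intro ext arg_cong2[where f="(/)"] refl arg_cong2[where f="(-)"] sum.cong)
  fix \<gamma> \<alpha> assume a: "\<alpha> \<in> {\<alpha>. (\<forall>i. \<alpha> i \<le> \<beta> i) \<and> \<alpha> \<noteq> \<beta>}"
  then have sa: "supp n \<alpha>" and ml: "mdeg n \<alpha> < mdeg n \<beta>"
    using supp_le mdeg_less s by auto
  show "pmul (Qs n T (mdeg n \<beta>) \<alpha>) (pdiff n \<alpha> (mon \<beta>)) \<gamma> = pmul (qq n T \<alpha>) (pdiff n \<alpha> (mon \<beta>)) \<gamma>"
    using Qs_stable[OF sa ml] by simp
qed

lemma mon_Mon: "supp n \<beta> \<Longrightarrow> mon \<beta> \<in> Pd n (mdeg n \<beta>)"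
  by (rule mon_Pd) (simp add: Mon_iff)

lemma term_Pd:
  assumes qa: "qq n T \<alpha> \<in> Pd n (mdeg n \<alpha>)" and s: "supp n \<beta>" and le: "\<forall>i. \<alpha> i \<le> \<beta> i"
  shows "pmul (qq n T \<alpha>) (pdiff n \<alpha> (mon \<beta>)) \<in> Pd n (mdeg n \<beta>)"
proof -
  have sd: "supp n (\<lambda>i. \<beta> i - \<alpha> i)" using s by (auto simp: supp_def)
  have "pmul (qq n T \<alpha>) (pdiff n \<alpha> (mon \<beta>)) = (\<lambda>\<gamma>. cdf n \<alpha> \<beta> * pmul (qq n T \<alpha>) (mon (\<lambda>i. \<beta> i - \<alpha> i)) \<gamma>)"
    using le by (simp add: pdiff_mon pmul_scale2)
  moreover have "pmul (qq n T \<alpha>) (mon (\<lambda>i. \<beta> i - \<alpha> i)) \<in> Pd n (mdeg n \<beta>)"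
    using pmul_mon_Pd[OF qa sd] mdeg_sub[OF le, of n] by (simp add: add.commute)
  ultimately show ?thesis by (simp add: Pd_scale)
qed

lemma qq_Pd:
  assumes T: "pres n T"
  shows "supp n \<beta> \<Longrightarrow> qq n T \<beta> \<in> Pd n (mdeg n \<beta>)"
proof (induction "mdeg n \<beta>" arbitrary: \<beta> rule: less_induct)
  case less
  have "(\<lambda>\<gamma>. \<Sum>\<alpha>\<in>{\<alpha>. (\<forall>i. \<alpha> i \<le> \<beta> i) \<and> \<alpha> \<noteq> \<beta>}. pmul (qq n T \<alpha>) (pdiff n \<alpha> (mon \<beta>)) \<gamma>) \<in> Pd n (mdeg n \<beta>)"
  proof (rule Pd_sum)
    fix \<alpha> assume a: "\<alpha> \<in> {\<alpha>. (\<forall>i. \<alpha> i \<le> \<beta> i) \<and> \<alpha> \<noteq> \<beta>}"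
    then have sa: "supp n \<alpha>" and ml: "mdeg n \<alpha> < mdeg n \<beta>"
      using supp_le mdeg_less less.prems by auto
    show "pmul (qq n T \<alpha>) (pdiff n \<alpha> (mon \<beta>)) \<in> Pd n (mdeg n \<beta>)"
      using term_Pd[OF less.hyps[OF ml sa] less.prems] a by simp
  qed
  moreover have "T (mon \<beta>) \<in> Pd n (mdeg n \<beta>)" using presD[OF T mon_Mon[OF less.prems]] .
  ultimately show ?case unfolding qq_eq[OF less.prems] by (intro Pd_div Pd_diff)
qed

lemma cf_pos: "cf n \<beta> > 0"
  unfolding cf_def by (intro prod_pos) auto

lemma key_mon:
  assumes T: "pres n T" and b: "\<beta> \<in> Mon n d"
  shows "(\<lambda>\<gamma>. \<Sum>\<alpha>\<in>Mon n d. pmul (qq n T \<alpha>) (pdiff n \<alpha> (mon \<beta>)) \<gamma>) = T (mon \<beta>)"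
proof (rule ext)
  fix \<gamma>
  have s: "supp n \<beta>" using b by (simp add: Mon_iff)
  let ?L = "{\<alpha>. \<forall>i. \<alpha> i \<le> \<beta> i}"
  let ?L' = "{\<alpha>. (\<forall>i. \<alpha> i \<le> \<beta> i) \<and> \<alpha> \<noteq> \<beta>}"
  have LM: "?L \<subseteq> Mon n d"
  proof
    fix \<alpha> assume "\<alpha> \<in> ?L"
    then have le: "\<forall>i. \<alpha> i \<le> \<beta> i" by simp
    then show "\<alpha> \<in> Mon n d" using b supp_le[OF s le] mdeg_mono[OF le, of n] by (simp add: Mon_iff)
  qed
  have fL: "finite ?L" using finite_le[OF s] .
  have "(\<Sum>\<alpha>\<in>Mon n d. pmul (qq n T \<alpha>) (pdiff n \<alpha> (mon \<beta>)) \<gamma>) = (\<Sum>\<alpha>\<in>?L. pmul (qq n T \<alpha>) (pdiff n \<alpha> (mon \<beta>)) \<gamma>)"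
    by (rule sum.mono_neutral_right[OF finite_Mon LM]) (auto simp: pdiff_mon pmul_zero2)
  also have "\<dots> = pmul (qq n T \<beta>) (pdiff n \<beta> (mon \<beta>)) \<gamma> + (\<Sum>\<alpha>\<in>?L'. pmul (qq n T \<alpha>) (pdiff n \<alpha> (mon \<beta>)) \<gamma>)"
  proof -
    have "?L = insert \<beta> ?L'" by auto
    then show ?thesis using fL by (simp add: sum.insert)
  qed
  also have "pmul (qq n T \<beta>) (pdiff n \<beta> (mon \<beta>)) \<gamma> = cf n \<beta> * qq n T \<beta> \<gamma>"
  proof -
    have "cdf n \<beta> \<beta> = cf n \<beta>" by (simp add: cdf_def cf_def)
    moreover have "(\<lambda>i. \<beta> i - \<beta> i) = (\<lambda>i. 0)" by simp
    moreover have "qq n T \<beta> \<in> Pol n" using qq_Pd[OF T s] Pd_Pol by blast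
    ultimately show ?thesis by (simp add: pdiff_mon pmul_scale2 pmul_mon supp_def)
  qed
  also have "cf n \<beta> * qq n T \<beta> \<gamma> = T (mon \<beta>) \<gamma> - (\<Sum>\<alpha>\<in>?L'. pmul (qq n T \<alpha>) (pdiff n \<alpha> (mon \<beta>)) \<gamma>)"
    using cf_pos[of n \<beta>] by (subst qq_eq[OF s]) simp
  finally show "(\<Sum>\<alpha>\<in>Mon n d. pmul (qq n T \<alpha>) (pdiff n \<alpha> (mon \<beta>)) \<gamma>) = T (mon \<beta>) \<gamma>" by simp
qed

lemma to_dops:
  assumes T: "plin n T" "pres n T"
  shows "T \<in> dops n"
  unfolding dops_def
proof (intro CollectI exI[of _ "qq n T"] conjI allI impI ballI)
  fix \<alpha> :: mono assume "\<forall>i\<ge>n. \<alpha> i = 0"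
  then show "qq n T \<alpha> \<in> Pd n (mdeg n \<alpha>)" using qq_Pd[OF T(2)] by (simp add: supp_def)
next
  fix d p assume p: "p \<in> Pd n d"
  have "T p = (\<lambda>\<gamma>. \<Sum>\<beta>\<in>Mon n d. p \<beta> * T (mon \<beta>) \<gamma>)" by (rule plin_decomp[OF T(1) p])
  also have "\<dots> = (\<lambda>\<gamma>. \<Sum>\<beta>\<in>Mon n d. p \<beta> * (\<Sum>\<alpha>\<in>Mon n d. pmul (qq n T \<alpha>) (pdiff n \<alpha> (mon \<beta>)) \<gamma>))"
  proof -
    have "T (mon \<beta>) \<gamma> = (\<Sum>\<alpha>\<in>Mon n d. pmul (qq n T \<alpha>) (pdiff n \<alpha> (mon \<beta>)) \<gamma>)"
      if "\<beta> \<in> Mon n d" for \<beta> \<gamma>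
      using fun_cong[OF key_mon[OF T(2) that], of \<gamma>] by simp
    then show ?thesis by (intro ext sum.cong refl) simp
  qed
  also have "\<dots> = (\<lambda>\<gamma>. \<Sum>\<alpha>\<in>Mon n d. \<Sum>\<beta>\<in>Mon n d. p \<beta> * pmul (qq n T \<alpha>) (pdiff n \<alpha> (mon \<beta>)) \<gamma>)"
    by (rule ext) (simp add: sum_distrib_left, rule sum.swap)
  also have "\<dots> = (\<lambda>\<gamma>. \<Sum>\<alpha>\<in>Mon n d. pmul (qq n T \<alpha>) (pdiff n \<alpha> p) \<gamma>)"
  proof -
    have "pdiff n \<alpha> p = (\<lambda>\<gamma>. \<Sum>\<beta>\<in>Mon n d. p \<beta> * pdiff n \<alpha> (mon \<beta>) \<gamma>)" for \<alpha>
      by (subst decomp[OF p]) (rule pdiff_sum)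
    then show ?thesis by (simp add: pmul_sum2)
  qed
  finally show "T p = (\<lambda>\<beta>. \<Sum>\<alpha>\<in>Mon n d. pmul (qq n T \<alpha>) (pdiff n \<alpha> p) \<beta>)" .
qed

definition nrm :: "nat \<Rightarrow> nat \<Rightarrow> rpoly \<Rightarrow> real" where
  "nrm n d p = (\<Sum>\<beta>\<in>Mon n d. \<bar>p \<beta>\<bar>)"

lemma nrm_nonneg: "nrm n d p \<ge> 0"
  unfolding nrm_def by (intro sum_nonneg) auto

lemma coord_le: "p \<in> Pd n d \<Longrightarrow> \<bar>p \<gamma>\<bar> \<le> nrm n d p"
proof (cases "\<gamma> \<in> Mon n d")
  case True
  then show ?thesis unfolding nrm_def by (intro member_le_sum finite_Mon) auto
next
  case False
  assume "p \<in> Pd n d"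
  then show ?thesis using False nrm_nonneg by (simp add: PdD)
qed

lemma op_bound:
  assumes T: "plin n T" "pres n T"
  shows "\<exists>M\<ge>0. \<forall>p\<in>Pd n d. nrm n d (T p) \<le> M * nrm n d p"
proof -
  define M where "M = (\<Sum>\<beta>\<in>Mon n d. nrm n d (T (mon \<beta>)))"
  have M0: "M \<ge> 0" unfolding M_def by (intro sum_nonneg nrm_nonneg)
  have Mb: "nrm n d (T (mon \<beta>)) \<le> M" if "\<beta> \<in> Mon n d" for \<beta>
    unfolding M_def using that by (intro member_le_sum finite_Mon nrm_nonneg)
  have "nrm n d (T p) \<le> M * nrm n d p" if p: "p \<in> Pd n d" for p
  proof -
    have "nrm n d (T p) = (\<Sum>\<gamma>\<in>Mon n d. \<bar>\<Sum>\<beta>\<in>Mon n d. p \<beta> * T (mon \<beta>) \<gamma>\<bar>)"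
      unfolding nrm_def by (subst plin_decomp[OF T(1) p]) simp
    also have "\<dots> \<le> (\<Sum>\<gamma>\<in>Mon n d. \<Sum>\<beta>\<in>Mon n d. \<bar>p \<beta>\<bar> * \<bar>T (mon \<beta>) \<gamma>\<bar>)"
      by (intro sum_mono order_trans[OF sum_abs]) (simp add: abs_mult)
    also have "\<dots> = (\<Sum>\<beta>\<in>Mon n d. \<bar>p \<beta>\<bar> * nrm n d (T (mon \<beta>)))"
      by (subst sum.swap) (simp add: nrm_def sum_distrib_left)
    also have "\<dots> \<le> (\<Sum>\<beta>\<in>Mon n d. \<bar>p \<beta>\<bar> * M)"
      by (intro sum_mono mult_left_mono Mb) auto
    also have "\<dots> = M * nrm n d p" by (simp add: nrm_def sum_distrib_left mult.commute)
    finally show ?thesis .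
  qed
  then show ?thesis using M0 by blast
qed

context
  fixes n :: nat and A :: "rpoly \<Rightarrow> rpoly"
  assumes Al: "plin n A" and Ap: "pres n A"
begin

lemma Apow_plin: "plin n (A ^^ k)" and Apow_pres: "pres n (A ^^ k)"
  using funpow_lin[OF Al Ap] by auto

lemma Apow_Pd: "p \<in> Pd n d \<Longrightarrow> (A ^^ k) p \<in> Pd n d"
  using presD[OF Apow_pres] .

lemma pow_bound:
  assumes M: "\<forall>p\<in>Pd n d. nrm n d (A p) \<le> M * nrm n d p" "M \<ge> 0" and p: "p \<in> Pd n d"
  shows "nrm n d ((A ^^ k) p) \<le> M ^ k * nrm n d p"
proof (induction k)
  case 0
  then show ?case by simp
next
  case (Suc k)
  have "nrm n d ((A ^^ Suc k) p) = nrm n d (A ((A ^^ k) p))" by simp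
  also have "\<dots> \<le> M * nrm n d ((A ^^ k) p)" using M(1) Apow_Pd[OF p] by blast
  also have "\<dots> \<le> M * (M ^ k * nrm n d p)" using Suc M(2) by (intro mult_left_mono) auto
  finally show ?case by simp
qed

lemma exists_bound: "\<exists>M\<ge>0. \<forall>p\<in>Pd n d. \<forall>k \<gamma>. \<bar>(A ^^ k) p \<gamma>\<bar> \<le> M ^ k * nrm n d p"
proof -
  obtain M where M: "M \<ge> 0" "\<forall>p\<in>Pd n d. nrm n d (A p) \<le> M * nrm n d p"
    using op_bound[OF Al Ap] by blast
  have "\<bar>(A ^^ k) p \<gamma>\<bar> \<le> M ^ k * nrm n d p" if p: "p \<in> Pd n d" for p k \<gamma>
    using coord_le[OF Apow_Pd[OF p], of k \<gamma>] pow_bound[OF M(2) M(1) p, of k] by linarith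
  then show ?thesis using M by blast
qed

lemma exp_abs_summable:
  assumes p: "p \<in> Pd n d"
  shows "summable (\<lambda>k. \<bar>t ^ k / fact k * (A ^^ k) p \<gamma>\<bar>)"
proof -
  obtain M where M: "M \<ge> 0" "\<forall>p\<in>Pd n d. \<forall>k \<gamma>. \<bar>(A ^^ k) p \<gamma>\<bar> \<le> M ^ k * nrm n d p"
    using exists_bound by blast
  have s: "summable (\<lambda>k. (\<bar>t\<bar> * M) ^ k /\<^sub>R fact k)" by (rule summable_exp_generic)
  have s2: "summable (\<lambda>k. (\<bar>t\<bar> * M) ^ k / fact k * nrm n d p)"
    using summable_mult2[OF s, of "nrm n d p"] by (simp add: divide_inverse_commute)
  show ?thesis
  proof (rule summable_comparison_test'[OF s2])
    fix k :: nat
    have "\<bar>t ^ k / fact k * (A ^^ k) p \<gamma>\<bar> = \<bar>t\<bar> ^ k / fact k * \<bar>(A ^^ k) p \<gamma>\<bar>"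
      by (simp add: abs_mult power_abs)
    also have "\<dots> \<le> \<bar>t\<bar> ^ k / fact k * (M ^ k * nrm n d p)"
      using M p by (intro mult_left_mono) auto
    also have "\<dots> = (\<bar>t\<bar> * M) ^ k / fact k * nrm n d p" by (simp add: power_mult_distrib)
    finally show "norm \<bar>t ^ k / fact k * (A ^^ k) p \<gamma>\<bar> \<le> (\<bar>t\<bar> * M) ^ k / fact k * nrm n d p" by simp
  qed
qed

lemma exp_summable: "p \<in> Pd n d \<Longrightarrow> summable (\<lambda>k. t ^ k / fact k * (A ^^ k) p \<gamma>)"
  using summable_rabs_cancel[OF exp_abs_summable] .

end

lemma lin_suminf:
  assumes T: "plin n T" "pres n T" and f: "\<And>k. f k \<in> Pd n d" and s: "\<And>\<gamma>. summable (\<lambda>k. f k \<gamma>)"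
  shows "T (\<lambda>\<gamma>. \<Sum>k. f k \<gamma>) = (\<lambda>\<gamma>. \<Sum>k. T (f k) \<gamma>)"
proof -
  have u: "(\<lambda>\<gamma>. \<Sum>k. f k \<gamma>) \<in> Pd n d" using f by (auto simp: Pd_iff)
  have "T (\<lambda>\<gamma>. \<Sum>k. f k \<gamma>) = (\<lambda>\<gamma>. \<Sum>\<beta>\<in>Mon n d. (\<Sum>k. f k \<beta>) * T (mon \<beta>) \<gamma>)"
    by (rule plin_decomp[OF T(1) u])
  also have "\<dots> = (\<lambda>\<gamma>. \<Sum>\<beta>\<in>Mon n d. \<Sum>k. f k \<beta> * T (mon \<beta>) \<gamma>)"
    by (simp add: suminf_mult2 s)
  also have "\<dots> = (\<lambda>\<gamma>. \<Sum>k. \<Sum>\<beta>\<in>Mon n d. f k \<beta> * T (mon \<beta>) \<gamma>)"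
    by (rule ext, rule suminf_sum[symmetric]) (simp add: summable_mult2 s)
  also have "\<dots> = (\<lambda>\<gamma>. \<Sum>k. T (f k) \<gamma>)" using plin_decomp[OF T(1) f] by simp
  finally show ?thesis .
qed

context
  fixes n :: nat and A :: "rpoly \<Rightarrow> rpoly"
  assumes Al: "plin n A" and Ap: "pres n A"
begin

lemma opexp_Pd: "p \<in> Pd n d \<Longrightarrow> op_exp t A p \<in> Pd n d"
  unfolding op_exp_def using Apow_Pd[OF Al Ap] by (auto simp: Pd_iff)

lemma opexp_pres: "pres n (op_exp t A)"
  unfolding pres_def using opexp_Pd by blast

lemma opexp_plin: "plin n (op_exp t A)"
  unfolding plin_def
proof (intro ballI allI)
  fix p q a b assume "p \<in> Pol n" "q \<in> Pol n"
  then obtain d1 d2 where "p \<in> Pd n d1" "q \<in> Pd n d2" by (auto simp: Pol_iff)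
  then have p: "p \<in> Pd n (max d1 d2)" and q: "q \<in> Pd n (max d1 d2)"
    by (meson Pd_mono max.cobounded1 max.cobounded2)+
  show "op_exp t A (\<lambda>\<gamma>. a * p \<gamma> + b * q \<gamma>) = (\<lambda>\<gamma>. a * op_exp t A p \<gamma> + b * op_exp t A q \<gamma>)"
  proof (rule ext)
    fix \<gamma>
    have e: "(A ^^ k) (\<lambda>\<gamma>. a * p \<gamma> + b * q \<gamma>) = (\<lambda>\<gamma>. a * (A ^^ k) p \<gamma> + b * (A ^^ k) q \<gamma>)" for k
      using plinD[OF Apow_plin[OF Al Ap]] p q Pd_Pol by blast
    have sP: "summable (\<lambda>k. t ^ k / fact k * (A ^^ k) p \<gamma>)" using exp_summable[OF Al Ap p] .
    have sQ: "summable (\<lambda>k. t ^ k / fact k * (A ^^ k) q \<gamma>)" using exp_summable[OF Al Ap q] .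
    have "(\<lambda>k. t ^ k / fact k * (A ^^ k) (\<lambda>\<gamma>. a * p \<gamma> + b * q \<gamma>) \<gamma>) sums
        (a * (\<Sum>k. t ^ k / fact k * (A ^^ k) p \<gamma>) + b * (\<Sum>k. t ^ k / fact k * (A ^^ k) q \<gamma>))"
      using sums_add[OF sums_mult[OF summable_sums[OF sP], of a] sums_mult[OF summable_sums[OF sQ], of b]]
      by (simp add: e algebra_simps)
    then show "op_exp t A (\<lambda>\<gamma>. a * p \<gamma> + b * q \<gamma>) \<gamma> = a * op_exp t A p \<gamma> + b * op_exp t A q \<gamma>"
      unfolding op_exp_def by (simp add: sums_iff)
  qed
qed

lemma opexp_zero: "op_exp 0 A p = p"
proof (rule ext)
  fix \<gamma>
  have "(\<Sum>k. (0 ^ k / fact k) * (A ^^ k) p \<gamma>) = (\<Sum>k\<in>{0}. (0 ^ k / fact k) * (A ^^ k) p \<gamma>)"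
    by (rule suminf_finite) auto
  then show "op_exp 0 A p \<gamma> = p \<gamma>" unfolding op_exp_def by simp
qed

lemma opexp_comm:
  assumes p: "p \<in> Pd n d"
  shows "(A ^^ j) (op_exp t A p) = (\<lambda>\<gamma>. \<Sum>k. t ^ k / fact k * (A ^^ j) ((A ^^ k) p) \<gamma>)"
proof -
  have "(A ^^ j) (op_exp t A p) = (A ^^ j) (\<lambda>\<gamma>. \<Sum>k. (\<lambda>\<gamma>. t ^ k / fact k * (A ^^ k) p \<gamma>) \<gamma>)"
    unfolding op_exp_def by simp
  also have "\<dots> = (\<lambda>\<gamma>. \<Sum>k. (A ^^ j) (\<lambda>\<gamma>. t ^ k / fact k * (A ^^ k) p \<gamma>) \<gamma>)"
    by (rule lin_suminf[OF Apow_plin[OF Al Ap] Apow_pres[OF Al Ap]])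
       (rule Pd_scale[OF Apow_Pd[OF Al Ap p]], rule exp_summable[OF Al Ap p])
  also have "\<dots> = (\<lambda>\<gamma>. \<Sum>k. t ^ k / fact k * (A ^^ j) ((A ^^ k) p) \<gamma>)"
  proof -
    have "(A ^^ j) (\<lambda>\<gamma>. t ^ k / fact k * (A ^^ k) p \<gamma>) = (\<lambda>\<gamma>. t ^ k / fact k * (A ^^ j) ((A ^^ k) p) \<gamma>)" for k
      by (rule plin_scale[OF Apow_plin[OF Al Ap]]) (rule Pd_Pol[OF Apow_Pd[OF Al Ap p]])
    then show ?thesis by (simp only: )
  qed
  finally show ?thesis .
qed

lemma binom_exp:
  fixes s t :: real
  shows "(s + t) ^ m / fact m = (\<Sum>i\<le>m. s ^ i / fact i * (t ^ (m - i) / fact (m - i)))"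
proof -
  have "(s + t) ^ m / fact m = (\<Sum>i\<le>m. of_nat (m choose i) * s ^ i * t ^ (m - i)) / fact m"
    by (simp add: binomial_ring)
  also have "\<dots> = (\<Sum>i\<le>m. of_nat (m choose i) * s ^ i * t ^ (m - i) / fact m)"
    by (simp add: sum_divide_distrib)
  also have "\<dots> = (\<Sum>i\<le>m. s ^ i / fact i * (t ^ (m - i) / fact (m - i)))"
  proof (rule sum.cong)
    fix i assume "i \<in> {..m}"
    then have "i \<le> m" by simp
    then show "of_nat (m choose i) * s ^ i * t ^ (m - i) / fact m = s ^ i / fact i * (t ^ (m - i) / fact (m - i))"
      by (simp add: binomial_fact field_simps)
  qed simp
  finally show ?thesis .
qed

end

context
  fixes n :: nat and A :: "rpoly \<Rightarrow> rpoly"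
  assumes Al: "plin n A" and Ap: "pres n A"
begin

lemma opexp_semigroup:
  assumes p: "p \<in> Pd n d"
  shows "op_exp s A (op_exp t A p) = op_exp (s + t) A p"
proof (rule ext)
  fix \<gamma>
  let ?S = "Mon n d"
  define x where "x \<beta> j = s ^ j / fact j * (A ^^ j) (mon \<beta>) \<gamma>" for \<beta> j
  define y where "y \<beta> k = t ^ k / fact k * (A ^^ k) p \<beta>" for \<beta> k
  define u where "u = op_exp t A p"
  have u: "u \<in> Pd n d" unfolding u_def by (rule opexp_Pd[OF Al Ap p])
  have uy: "u \<beta> = (\<Sum>k. y \<beta> k)" for \<beta> unfolding u_def y_def op_exp_def by simp
  have monP: "\<beta> \<in> ?S \<Longrightarrow> mon \<beta> \<in> Pd n d" for \<beta> by (rule mon_Pd)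
  have sx: "\<beta> \<in> ?S \<Longrightarrow> summable (\<lambda>j. \<bar>x \<beta> j\<bar>)" for \<beta>
    unfolding x_def by (rule exp_abs_summable[OF Al Ap monP])
  have sy: "summable (\<lambda>k. \<bar>y \<beta> k\<bar>)" for \<beta>
    unfolding y_def by (rule exp_abs_summable[OF Al Ap p])
  have sx': "\<beta> \<in> ?S \<Longrightarrow> summable (\<lambda>j. x \<beta> j)" for \<beta>
    using summable_rabs_cancel[OF sx] .
  have step1: "s ^ j / fact j * (A ^^ j) u \<gamma> = (\<Sum>\<beta>\<in>?S. (\<Sum>k. y \<beta> k) * x \<beta> j)" for j
  proof -
    have "(A ^^ j) u \<gamma> = (\<Sum>\<beta>\<in>?S. u \<beta> * (A ^^ j) (mon \<beta>) \<gamma>)"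
      by (subst plin_decomp[OF Apow_plin[OF Al Ap] u]) simp
    then show ?thesis unfolding uy[symmetric] x_def by (simp add: sum_distrib_left mult_ac)
  qed
  have "op_exp s A u \<gamma> = (\<Sum>j. \<Sum>\<beta>\<in>?S. (\<Sum>k. y \<beta> k) * x \<beta> j)"
    unfolding op_exp_def using step1 by simp
  also have "\<dots> = (\<Sum>\<beta>\<in>?S. \<Sum>j. (\<Sum>k. y \<beta> k) * x \<beta> j)"
    by (rule suminf_sum) (rule summable_mult, rule sx')
  also have "\<dots> = (\<Sum>\<beta>\<in>?S. (\<Sum>j. x \<beta> j) * (\<Sum>k. y \<beta> k))"
    by (intro sum.cong refl) (simp add: suminf_mult[OF sx'] mult.commute)
  also have "\<dots> = (\<Sum>\<beta>\<in>?S. \<Sum>m. \<Sum>i\<le>m. x \<beta> i * y \<beta> (m - i))"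
    by (intro sum.cong refl Cauchy_product) (auto simp: sx sy)
  also have "\<dots> = (\<Sum>m. \<Sum>\<beta>\<in>?S. \<Sum>i\<le>m. x \<beta> i * y \<beta> (m - i))"
    by (rule suminf_sum[symmetric]) (rule sums_summable[OF Cauchy_product_sums]; auto simp: sx sy)
  also have "\<dots> = (\<Sum>m. (s + t) ^ m / fact m * (A ^^ m) p \<gamma>)"
  proof (rule suminf_cong)
    fix m
    have "(\<Sum>\<beta>\<in>?S. \<Sum>i\<le>m. x \<beta> i * y \<beta> (m - i))
        = (\<Sum>i\<le>m. s ^ i / fact i * (t ^ (m - i) / fact (m - i)) *
             (\<Sum>\<beta>\<in>?S. (A ^^ (m - i)) p \<beta> * (A ^^ i) (mon \<beta>) \<gamma>))"
      by (subst sum.swap, rule sum.cong[OF refl], subst sum_distrib_left, rule sum.cong[OF refl]) (simp add: x_def y_def mult_ac)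
    also have "\<dots> = (\<Sum>i\<le>m. s ^ i / fact i * (t ^ (m - i) / fact (m - i)) * (A ^^ m) p \<gamma>)"
    proof (rule sum.cong)
      fix i assume "i \<in> {..m}"
      then have im: "i + (m - i) = m" by simp
      have "(A ^^ i) ((A ^^ (m - i)) p) \<gamma> = (\<Sum>\<beta>\<in>?S. (A ^^ (m - i)) p \<beta> * (A ^^ i) (mon \<beta>) \<gamma>)"
        by (subst plin_decomp[OF Apow_plin[OF Al Ap] Apow_Pd[OF Al Ap p]]) simp
      moreover have "(A ^^ i) ((A ^^ (m - i)) p) = (A ^^ m) p"
        using funpow_add[of i "m - i" A] im by (metis comp_apply)
      ultimately show "s ^ i / fact i * (t ^ (m - i) / fact (m - i)) * (\<Sum>\<beta>\<in>?S. (A ^^ (m - i)) p \<beta> * (A ^^ i) (mon \<beta>) \<gamma>)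
          = s ^ i / fact i * (t ^ (m - i) / fact (m - i)) * (A ^^ m) p \<gamma>" by simp
    qed simp
    also have "\<dots> = (s + t) ^ m / fact m * (A ^^ m) p \<gamma>"
      by (simp only: binom_exp[OF Al Ap] sum_distrib_right)
    finally show "(\<Sum>\<beta>\<in>?S. \<Sum>i\<le>m. x \<beta> i * y \<beta> (m - i)) = (s + t) ^ m / fact m * (A ^^ m) p \<gamma>" .
  qed
  finally show "op_exp s A (op_exp t A p) \<gamma> = op_exp (s + t) A p \<gamma>"
    unfolding u_def by (simp add: op_exp_def)
qed

lemma opexp_inj: "inj_on (op_exp t A) (Pol n)"
proof (rule inj_onI)
  fix p q assume "p \<in> Pol n" "q \<in> Pol n" and e: "op_exp t A p = op_exp t A q"
  then obtain d1 d2 where "p \<in> Pd n d1" "q \<in> Pd n d2" by (auto simp: Pol_iff)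
  then have p: "p \<in> Pd n (max d1 d2)" and q: "q \<in> Pd n (max d1 d2)"
    by (meson Pd_mono max.cobounded1 max.cobounded2)+
  have "p = op_exp (- t) A (op_exp t A p)" using opexp_semigroup[OF p, of "-t" t] opexp_zero[OF Al Ap] by simp
  also have "\<dots> = op_exp (- t) A (op_exp t A q)" using e by simp
  also have "\<dots> = q" using opexp_semigroup[OF q, of "-t" t] opexp_zero[OF Al Ap] by simp
  finally show "p = q" .
qed

end

lemma tendsto_fun_iff:
  fixes f :: "'b \<Rightarrow> 'a \<Rightarrow> real"
  shows "(f \<longlongrightarrow> l) F \<longleftrightarrow> (\<forall>i. ((\<lambda>c. f c i) \<longlongrightarrow> l i) F)"
  using limitin_componentwise[of "\<lambda>_. euclidean" UNIV f l F]
  unfolding euclidean_product_topology limitin_canonical_iff by simp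

lemma pascal_sum:
  fixes a :: "nat \<Rightarrow> real"
  shows "(\<Sum>j\<le>Suc k. of_nat (Suc k choose j) * c ^ j * a j) =
    (\<Sum>j\<le>k. of_nat (k choose j) * c ^ j * a j) + c * (\<Sum>j\<le>k. of_nat (k choose j) * c ^ j * a (Suc j))"
proof -
  have "(\<Sum>j\<le>Suc k. of_nat (Suc k choose j) * c ^ j * a j) =
      a 0 + (\<Sum>j\<le>k. of_nat (Suc k choose Suc j) * c ^ Suc j * a (Suc j))"
    by (subst sum.atMost_Suc_shift) simp
  also have "\<dots> = a 0 + (\<Sum>j\<le>k. of_nat (k choose Suc j) * c ^ Suc j * a (Suc j))
      + (\<Sum>j\<le>k. of_nat (k choose j) * c ^ Suc j * a (Suc j))"
    by (simp add: sum.distrib algebra_simps)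
  also have "a 0 + (\<Sum>j\<le>k. of_nat (k choose Suc j) * c ^ Suc j * a (Suc j)) =
      (\<Sum>j\<le>k. of_nat (k choose j) * c ^ j * a j)"
  proof -
    have "(\<Sum>j\<le>k. of_nat (k choose j) * c ^ j * a j) =
        a 0 + (\<Sum>j<k. of_nat (k choose Suc j) * c ^ Suc j * a (Suc j))"
      by (subst sum.atMost_shift) simp
    also have "(\<Sum>j<k. of_nat (k choose Suc j) * c ^ Suc j * a (Suc j)) =
        (\<Sum>j\<le>k. of_nat (k choose Suc j) * c ^ Suc j * a (Suc j))"
      by (simp add: lessThan_Suc_atMost[symmetric])
    finally show ?thesis by simp
  qed
  also have "(\<Sum>j\<le>k. of_nat (k choose j) * c ^ Suc j * a (Suc j)) =
      c * (\<Sum>j\<le>k. of_nat (k choose j) * c ^ j * a (Suc j))"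
    by (simp add: sum_distrib_left algebra_simps)
  finally show ?thesis .
qed

context
  fixes n :: nat and A :: "rpoly \<Rightarrow> rpoly"
  assumes Al: "plin n A" and Ap: "pres n A"
begin

lemma Bpow:
  assumes p: "p \<in> Pd n d"
  shows "((\<lambda>u. padd u (pscale c (A u))) ^^ k) p = (\<lambda>\<gamma>. \<Sum>j\<le>k. of_nat (k choose j) * c ^ j * (A ^^ j) p \<gamma>)"
proof (induction k)
  case 0
  show ?case by simp
next
  case (Suc k)
  define u where "u = (\<lambda>\<gamma>. \<Sum>j\<le>k. of_nat (k choose j) * c ^ j * (A ^^ j) p \<gamma>)"
  have Au: "A u = (\<lambda>\<gamma>. \<Sum>j\<le>k. of_nat (k choose j) * c ^ j * A ((A ^^ j) p) \<gamma>)"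
    unfolding u_def
    by (rule plin_sum[OF Al, where f="\<lambda>j. (A ^^ j) p" and c="\<lambda>j. of_nat (k choose j) * c ^ j"])
       (auto intro: Apow_Pd[OF Al Ap p])
  have "((\<lambda>u. padd u (pscale c (A u))) ^^ Suc k) p = padd u (pscale c (A u))"
    using Suc by (simp add: u_def)
  also have "\<dots> = (\<lambda>\<gamma>. u \<gamma> + c * A u \<gamma>)" by (simp add: padd_def pscale_def)
  also have "\<dots> = (\<lambda>\<gamma>. \<Sum>j\<le>Suc k. of_nat (Suc k choose j) * c ^ j * (A ^^ j) p \<gamma>)"
  proof (rule ext)
    fix \<gamma>
    show "u \<gamma> + c * A u \<gamma> = (\<Sum>j\<le>Suc k. of_nat (Suc k choose j) * c ^ j * (A ^^ j) p \<gamma>)"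
      using pascal_sum[of k c "\<lambda>j. (A ^^ j) p \<gamma>"] unfolding Au by (simp add: u_def)
  qed
  finally show ?case .
qed

end

lemma binom_le:
  fixes t :: real
  assumes t: "t \<ge> 0"
  shows "of_nat (m choose j) * (t / real m) ^ j \<le> t ^ j / fact j"
proof (cases "m = 0")
  case True
  then show ?thesis using t by (cases j) auto
next
  case False
  then have m: "real m > 0" by simp
  have h: "of_nat (m choose j) * fact j \<le> (real m) ^ j"
    using binomial_fact_pow[of m j] by (metis of_nat_fact of_nat_le_iff of_nat_mult of_nat_power)
  have "of_nat (m choose j) * (t / real m) ^ j = (of_nat (m choose j) * fact j) * (t ^ j / (fact j * real m ^ j))"
    using m by (simp add: power_divide field_simps)
  also have "\<dots> \<le> real m ^ j * (t ^ j / (fact j * real m ^ j))"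
    using h t by (intro mult_right_mono) auto
  also have "\<dots> = t ^ j / fact j" using m by (simp add: field_simps)
  finally show ?thesis .
qed

lemma binom_prod:
  fixes t :: real
  shows "of_nat (m choose j) * (t / real m) ^ j = (\<Prod>i=0..<j. (real m - real i) * (t / real m)) / fact j"
proof -
  have c: "of_nat (m choose j) = (\<Prod>i=0..<j. real m - real i) / fact j"
    by (simp add: binomial_gbinomial gbinomial_prod_rev)
  have e: "(t / real m) ^ j = (\<Prod>i=0..<j. t / real m)" by simp
  show ?thesis by (simp only: prod.distrib c e) simp
qed

lemma binom_coef_lim:
  fixes t :: real
  shows "(\<lambda>m. of_nat (m choose j) * (t / real m) ^ j) \<longlonglongrightarrow> t ^ j / fact j"
proof -
  have f: "(\<lambda>m. (real m - real i) * (t / real m)) \<longlonglongrightarrow> t" for i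
  proof -
    have "(\<lambda>m. t - (real i * t) / real m) \<longlonglongrightarrow> t - 0"
      by (intro tendsto_diff tendsto_const lim_const_over_n)
    moreover have "eventually (\<lambda>m. t - (real i * t) / real m = (real m - real i) * (t / real m)) sequentially"
      using eventually_gt_at_top[of 0] by eventually_elim (simp add: field_simps)
    ultimately show ?thesis using Lim_transform_eventually by fastforce
  qed
  have "(\<lambda>m. (\<Prod>i=0..<j. (real m - real i) * (t / real m)) / fact j) \<longlonglongrightarrow> (\<Prod>i=0..<j. t) / fact j"
    by (intro tendsto_divide tendsto_prod f tendsto_const) auto
  then show ?thesis by (simp add: binom_prod)
qed

lemma binom_limit:
  fixes a :: "nat \<Rightarrow> real" and t M N :: real
  assumes t: "t \<ge> 0" and M: "M \<ge> 0" and bnd: "\<And>j. \<bar>a j\<bar> \<le> M ^ j * N"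
  shows "(\<lambda>m. \<Sum>j\<le>m. of_nat (m choose j) * (t / real m) ^ j * a j) \<longlonglongrightarrow> (\<Sum>j. t ^ j / fact j * a j)"
proof -
  define f where "f j m = of_nat (m choose j) * (t / real m) ^ j * a j" for j m
  define g where "g j = (t * M) ^ j / fact j * N" for j
  have lim: "(\<lambda>m. f j m) \<longlonglongrightarrow> t ^ j / fact j * a j" for j
    unfolding f_def by (intro tendsto_mult binom_coef_lim tendsto_const)
  have bound: "norm (f j m) \<le> g j" for j m
  proof -
    have "norm (f j m) = of_nat (m choose j) * (t / real m) ^ j * \<bar>a j\<bar>"
      using t by (simp add: f_def abs_mult)
    also have "\<dots> \<le> t ^ j / fact j * (M ^ j * N)"
      using binom_le[OF t, of m j] bnd[of j] t
      by (intro mult_mono) auto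
    also have "\<dots> = g j" by (simp add: g_def power_mult_distrib)
    finally show ?thesis .
  qed
  have sg: "summable g"
  proof -
    have s: "summable (\<lambda>k. (t * M) ^ k /\<^sub>R fact k)" by (rule summable_exp_generic)
    show ?thesis using summable_mult2[OF s, of N] by (simp add: g_def[abs_def] divide_inverse_commute)
  qed
  have "(\<lambda>m. suminf (\<lambda>j. f j m)) \<longlonglongrightarrow> (\<Sum>j. t ^ j / fact j * a j)"
  proof -
    have ev: "eventually (\<lambda>(k, m). norm (f k m) \<le> g k) (at_top \<times>\<^sub>F sequentially)"
      using bound by (simp add: always_eventually case_prod_beta)
    show ?thesis
      using tannerys_theorem[of f "\<lambda>j. t ^ j / fact j * a j" sequentially g, OF lim ev sg] by simp
  qed
  moreover have "suminf (\<lambda>j. f j m) = (\<Sum>j\<le>m. of_nat (m choose j) * (t / real m) ^ j * a j)" for m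
    by (subst suminf_finite[of "{..m}"]) (auto simp: f_def binomial_eq_0)
  ultimately show ?thesis by simp
qed

lemma invariance:
  assumes C: "C \<subseteq> Pol n" "LF_closed n C" and Al: "plin n A" and Ap: "pres n A"
    and h: "\<forall>d. \<exists>\<epsilon>>0. \<forall>s::real. 0 \<le> s \<and> s < \<epsilon> \<longrightarrow>
           (\<forall>p\<in>C \<inter> Pd n d. padd p (pscale s (A p)) \<in> C \<inter> Pd n d)"
    and p: "p \<in> C" and t0: "t \<ge> 0"
  shows "op_exp t A p \<in> C"
proof (cases "t = 0")
  case True
  then show ?thesis using p opexp_zero[OF Al Ap] by simp
next
  case False
  then have t: "t > 0" using t0 by simp
  obtain d where pd: "p \<in> Pd n d" using C(1) p Pol_iff by blast
  obtain \<epsilon> where \<epsilon>: "\<epsilon> > 0" "\<forall>s::real. 0 \<le> s \<and> s < \<epsilon> \<longrightarrow> (\<forall>q\<in>C \<inter> Pd n d. padd q (pscale s (A q)) \<in> C \<inter> Pd n d)"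
    using h by blast
  define F where "F m = ((\<lambda>u. padd u (pscale (t / real m) (A u))) ^^ m) p" for m
  have ev: "eventually (\<lambda>m. F m \<in> C \<inter> Pd n d) sequentially"
  proof -
    obtain m0 :: nat where m0: "t / \<epsilon> < real m0" using reals_Archimedean2 by blast
    have "F m \<in> C \<inter> Pd n d" if "m \<ge> m0" for m
    proof -
      have m: "t / \<epsilon> < real m" using that m0 by (meson le_less_trans not_le of_nat_le_iff)
      have mpos: "real m > 0" using m t \<epsilon>(1) by (smt (verit) divide_pos_pos)
      have s: "0 \<le> t / real m" "t / real m < \<epsilon>"
        using m mpos t \<epsilon>(1) by (auto simp: field_simps)
      have "((\<lambda>u. padd u (pscale (t / real m) (A u))) ^^ k) p \<in> C \<inter> Pd n d" for k
      proof (induction k)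
        case 0
        then show ?case using p pd by simp
      next
        case (Suc k)
        then show ?case using \<epsilon>(2) s by simp
      qed
      then show ?thesis unfolding F_def by blast
    qed
    then show ?thesis unfolding eventually_sequentially by blast
  qed
  have lim: "F \<longlonglongrightarrow> op_exp t A p"
    unfolding tendsto_fun_iff
  proof
    fix \<gamma>
    obtain M where M: "M \<ge> 0" "\<forall>p\<in>Pd n d. \<forall>k \<gamma>. \<bar>(A ^^ k) p \<gamma>\<bar> \<le> M ^ k * nrm n d p"
      using exists_bound[OF Al Ap] by blast
    have "F m \<gamma> = (\<Sum>j\<le>m. of_nat (m choose j) * (t / real m) ^ j * (A ^^ j) p \<gamma>)" for m
      unfolding F_def Bpow[OF Al Ap pd] by simp
    moreover have "(\<lambda>m. \<Sum>j\<le>m. of_nat (m choose j) * (t / real m) ^ j * (A ^^ j) p \<gamma>)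
        \<longlonglongrightarrow> (\<Sum>j. t ^ j / fact j * (A ^^ j) p \<gamma>)"
      by (rule binom_limit[OF t0 M(1)]) (use M pd in auto)
    ultimately show "(\<lambda>m. F m \<gamma>) \<longlonglongrightarrow> op_exp t A p \<gamma>" by (simp add: op_exp_def)
  qed
  obtain T where T: "closed T" "C \<inter> Pd n d = Pd n d \<inter> T"
    using C(2) unfolding LF_closed_def closedin_closed by blast
  have "eventually (\<lambda>m. F m \<in> T) sequentially"
    using ev T(2) by (auto elim: eventually_mono)
  then have "op_exp t A p \<in> T" using Lim_in_closed_set[OF T(1) _ _ lim] by simp
  moreover have "op_exp t A p \<in> Pd n d" by (rule opexp_Pd[OF Al Ap pd])
  ultimately show ?thesis using T(2) by blast
qed

theorem proposition5p5:
  fixes n :: nat and C :: "rpoly set" and A :: "rpoly \<Rightarrow> rpoly"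
  assumes "C \<subseteq> Pol n"
    and "pconvex C"
    and "LF_closed n C"
    and "A \<in> dops n"
    and "\<forall>d. \<exists>\<epsilon>>0. \<forall>s::real. 0 \<le> s \<and> s < \<epsilon> \<longrightarrow>
           (\<forall>p\<in>C \<inter> Pd n d. padd p (pscale s (A p)) \<in> C \<inter> Pd n d)"
  shows "A \<in> dops_C n C"
proof -
  have Al: "plin n A" and Ap: "pres n A" using dops_plin_pres[OF assms(4)] by auto
  have "op_exp t A \<in> Dops_C n C" if t: "t \<ge> 0" for t
  proof -
    have "op_exp t A \<in> dops n"
      by (rule to_dops[OF opexp_plin[OF Al Ap] opexp_pres[OF Al Ap]])
    moreover have "inj_on (op_exp t A) (Pol n)" by (rule opexp_inj[OF Al Ap])
    moreover have "op_exp t A ` C \<subseteq> C"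
      using invariance[OF assms(1) assms(3) Al Ap assms(5) _ t] by blast
    ultimately show ?thesis unfolding Dops_C_def Dops_def by blast
  qed
  then show ?thesis unfolding dops_C_def using assms(4) by blast
qed

end
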